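(* Let $r_I>r_0>0$, $v_1,v_2>0$, $w_V>0$ and $w_I$ be real numbers with $w_I\ge \frac{w_V v_2}{v_1+v_2}$. Let $n\ge 1$ be an integer and $l_1,\dots,l_{n-1}\ge 0$ be real numbers. Consider the optimization problem (P) described in the context. Then the optimal value of (P) is $$\left(\sum_{i=1}^{n}Y_i\right)^*=\frac{\sum_{i=1}^{n-1}\min\{l_i,2r_0\}+2r_0}{v_1+v_2}\,w_V .$$ Moreover, this optimal value is attained by the feasible point $$D_i^*=\frac{\min\{l_i,2r_I\}}{v_2}w_I,\quad Y_i^*=\frac{\min\{l_i,2r_0\}}{v_1+v_2}w_V\ (i=1,\dots,n-1),\qquad D_n^*=\frac{2r_I}{v_2}w_I,\quad Y_n^*=\frac{2r_0}{v_1+v_2}w_V .$$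
   Context: Model: a vehicle of interest (VoI) moving at speed $v_1$ receives data from $n$ "helper" vehicles moving in the opposite direction at speed $v_2$; consecutive helpers are at distances $l_1,\dots,l_{n-1}$; helpers download from an infrastructure point of radio range $r_I$ at rate $w_I$, and deliver to the VoI over vehicle links of range $r_0$ at rate $w_V$. $D_i$ is the amount of data helper $i$ receives from the infrastructure and $Y_i$ the amount it delivers to the VoI. The optimization problem (P), over real variables $D_1,\dots,D_n,Y_1,\dots,Y_n$, is: maximize $\sum_{i=1}^n Y_i$ subject to (i) $0\le D_i\le \frac{2r_I}{v_2}w_I$ for $i=1,\dots,n$; (ii) $\sum_{i=k_1}^{k_2}D_i\le \frac{\sum_{i=k_1}^{k_2-1}\min\{l_i,2r_I\}+2r_I}{v_2}w_I$ for all $1\le k_1\le k_2\le n$; (iii) $0\le Y_i\le \frac{2r_0}{v_1+v_2}w_V$ for $i=1,\dots,n$; (iv) $Y_i\le D_i$ for $i=1,\dots,n$; (v) $\sum_{i=k_1}^{k_2}Y_i\le \frac{\sum_{i=k_1}^{k_2-1}\min\{l_i,2r_0\}+2r_0}{v_1+v_2}w_V$ for all $1\le k_1\le k_2\le n$. (Empty sums are zero.) *)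

theory Defs
  imports Complex_Main
begin

text \<open>Feasibility for problem (P). Variables D, Y and distances l are indexed by
natural numbers; only indices 1..n (resp. 1..n-1 for l) are relevant.\<close>

definition feasibleP ::
  "nat \<Rightarrow> real \<Rightarrow> real \<Rightarrow> real \<Rightarrow> real \<Rightarrow> real \<Rightarrow> real \<Rightarrow> (nat \<Rightarrow> real)
   \<Rightarrow> (nat \<Rightarrow> real) \<Rightarrow> (nat \<Rightarrow> real) \<Rightarrow> bool" where
  "feasibleP n rI r0 v1 v2 wI wV l D Y \<longleftrightarrow>
     (\<forall>i\<in>{1..n}. 0 \<le> D i \<and> D i \<le> 2 * rI / v2 * wI) \<and>
     (\<forall>k1 k2. 1 \<le> k1 \<and> k1 \<le> k2 \<and> k2 \<le> n \<longrightarrow>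
        (\<Sum>i=k1..k2. D i) \<le> ((\<Sum>i=k1..<k2. min (l i) (2 * rI)) + 2 * rI) / v2 * wI) \<and>
     (\<forall>i\<in>{1..n}. 0 \<le> Y i \<and> Y i \<le> 2 * r0 / (v1 + v2) * wV) \<and>
     (\<forall>i\<in>{1..n}. Y i \<le> D i) \<and>
     (\<forall>k1 k2. 1 \<le> k1 \<and> k1 \<le> k2 \<and> k2 \<le> n \<longrightarrow>
        (\<Sum>i=k1..k2. Y i) \<le> ((\<Sum>i=k1..<k2. min (l i) (2 * r0)) + 2 * r0) / (v1 + v2) * wV)"

definition optimal_valueP ::
  "nat \<Rightarrow> real \<Rightarrow> real \<Rightarrow> real \<Rightarrow> real \<Rightarrow> real \<Rightarrow> real \<Rightarrow> (nat \<Rightarrow> real) \<Rightarrow> real \<Rightarrow> bool" where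
  "optimal_valueP n rI r0 v1 v2 wI wV l opt \<longleftrightarrow>
     (\<exists>D Y. feasibleP n rI r0 v1 v2 wI wV l D Y \<and> (\<Sum>i=1..n. Y i) = opt) \<and>
     (\<forall>D Y. feasibleP n rI r0 v1 v2 wI wV l D Y \<longrightarrow> (\<Sum>i=1..n. Y i) \<le> opt)"

end

theory Submission
  imports Defs
begin

lemma sum_split_last:
  fixes f :: "nat \<Rightarrow> real"
  assumes "k1 \<le> k2"
  shows "(\<Sum>i=k1..k2. f i) = (\<Sum>i=k1..<k2. f i) + f k2"
  using assms by (simp add: atLeastLessThanSuc_atLeastAtMost[symmetric] sum.atLeastLessThan_Suc)

theorem theorem2:
  fixes rI r0 v1 v2 wI wV :: real and n :: nat and l :: "nat \<Rightarrow> real"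
  assumes "rI > r0" "r0 > 0" "v1 > 0" "v2 > 0" "wV > 0"
    and "wI \<ge> wV * v2 / (v1 + v2)"
    and "n \<ge> 1"
    and "\<forall>i\<in>{1..<n}. l i \<ge> 0"
  defines "Dopt \<equiv> (\<lambda>i. if i < n then min (l i) (2 * rI) / v2 * wI else 2 * rI / v2 * wI)"
    and "Yopt \<equiv> (\<lambda>i. if i < n then min (l i) (2 * r0) / (v1 + v2) * wV else 2 * r0 / (v1 + v2) * wV)"
  shows "optimal_valueP n rI r0 v1 v2 wI wV l
           (((\<Sum>i=1..<n. min (l i) (2 * r0)) + 2 * r0) / (v1 + v2) * wV) \<and>
         feasibleP n rI r0 v1 v2 wI wV l Dopt Yopt \<and>
         (\<Sum>i=1..n. Yopt i) = ((\<Sum>i=1..<n. min (l i) (2 * r0)) + 2 * r0) / (v1 + v2) * wV"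
proof -
  have vpos: "v1 + v2 > 0" using assms by simp
  have wIpos: "wI > 0"
  proof -
    have "wV * v2 / (v1 + v2) > 0" using assms vpos by simp
    thus ?thesis using assms(6) by linarith
  qed
  have ratio: "wV / (v1 + v2) \<le> wI / v2"
  proof -
    have "wV * v2 / (v1 + v2) = (wV / (v1 + v2)) * v2" by simp
    hence "(wV / (v1 + v2)) * v2 \<le> wI" using assms(6) by simp
    thus ?thesis using assms(4) by (simp add: pos_le_divide_eq)
  qed
  have sumD: "(\<Sum>i=k1..<k2. Dopt i) = (\<Sum>i=k1..<k2. min (l i) (2 * rI)) / v2 * wI"
    if "k2 \<le> n" for k1 k2
    using that by (simp add: Dopt_def sum_divide_distrib[symmetric] sum_distrib_right[symmetric])
  have sumY: "(\<Sum>i=k1..<k2. Yopt i) = (\<Sum>i=k1..<k2. min (l i) (2 * r0)) / (v1 + v2) * wV"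
    if "k2 \<le> n" for k1 k2
    using that by (simp add: Yopt_def sum_divide_distrib[symmetric] sum_distrib_right[symmetric])
  have D1: "0 \<le> Dopt i \<and> Dopt i \<le> 2 * rI / v2 * wI" if "i \<in> {1..n}" for i
  proof (cases "i < n")
    case True
    hence "l i \<ge> 0" using assms(8) that by auto
    thus ?thesis using True assms wIpos
      by (auto simp: Dopt_def intro!: mult_right_mono divide_right_mono)
  next
    case False thus ?thesis using assms wIpos by (simp add: Dopt_def)
  qed
  have Y1: "0 \<le> Yopt i \<and> Yopt i \<le> 2 * r0 / (v1 + v2) * wV" if "i \<in> {1..n}" for i
  proof (cases "i < n")
    case True
    hence "l i \<ge> 0" using assms(8) that by auto
    thus ?thesis using True assms vpos
      by (auto simp: Yopt_def intro!: mult_right_mono divide_right_mono)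
  next
    case False thus ?thesis using assms vpos by (simp add: Yopt_def)
  qed
  have YD: "Yopt i \<le> Dopt i" if "i \<in> {1..n}" for i
  proof -
    have gen: "a / (v1 + v2) * wV \<le> b / v2 * wI" if "0 \<le> a" "a \<le> b" for a b
    proof -
      have "a / (v1 + v2) * wV = a * (wV / (v1 + v2))" by simp
      also have "\<dots> \<le> b * (wI / v2)"
        using that ratio assms vpos by (intro mult_mono) auto
      also have "\<dots> = b / v2 * wI" by simp
      finally show ?thesis .
    qed
    show ?thesis
    proof (cases "i < n")
      case True
      hence "l i \<ge> 0" using assms(8) that by auto
      hence "min (l i) (2 * r0) / (v1 + v2) * wV \<le> min (l i) (2 * rI) / v2 * wI"
        using assms(1,2) by (intro gen) auto
      thus ?thesis using True by (simp only: Dopt_def Yopt_def if_True)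
    next
      case False
      have "2 * r0 / (v1 + v2) * wV \<le> 2 * rI / v2 * wI"
        using assms(1,2) by (intro gen) auto
      thus ?thesis using False by (simp only: Dopt_def Yopt_def if_False)
    qed
  qed
  have feas: "feasibleP n rI r0 v1 v2 wI wV l Dopt Yopt"
    unfolding feasibleP_def
  proof (intro conjI allI impI ballI)
    fix i assume "i \<in> {1..n}"
    thus "0 \<le> Dopt i" "Dopt i \<le> 2 * rI / v2 * wI" "0 \<le> Yopt i"
      "Yopt i \<le> 2 * r0 / (v1 + v2) * wV" "Yopt i \<le> Dopt i"
      using D1 Y1 YD by auto
  next
    fix k1 k2 assume h: "1 \<le> k1 \<and> k1 \<le> k2 \<and> k2 \<le> n"
    hence "k2 \<in> {1..n}" by auto
    hence "Dopt k2 \<le> 2 * rI / v2 * wI" using D1 by auto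
    thus "(\<Sum>i=k1..k2. Dopt i) \<le> ((\<Sum>i=k1..<k2. min (l i) (2 * rI)) + 2 * rI) / v2 * wI"
      using h sumD[of k2 k1] sum_split_last[of k1 k2 Dopt]
      by (simp add: add_divide_distrib distrib_right)
  next
    fix k1 k2 assume h: "1 \<le> k1 \<and> k1 \<le> k2 \<and> k2 \<le> n"
    hence "k2 \<in> {1..n}" by auto
    hence "Yopt k2 \<le> 2 * r0 / (v1 + v2) * wV" using Y1 by auto
    thus "(\<Sum>i=k1..k2. Yopt i) \<le> ((\<Sum>i=k1..<k2. min (l i) (2 * r0)) + 2 * r0) / (v1 + v2) * wV"
      using h sumY[of k2 k1] sum_split_last[of k1 k2 Yopt]
      by (simp add: add_divide_distrib distrib_right)
  qed
  have sumopt: "(\<Sum>i=1..n. Yopt i) = ((\<Sum>i=1..<n. min (l i) (2 * r0)) + 2 * r0) / (v1 + v2) * wV"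
    using sumY[of n 1] sum_split_last[of 1 n Yopt] assms(7)
    by (simp add: Yopt_def add_divide_distrib distrib_right)
  have upper: "(\<Sum>i=1..n. Y i) \<le> ((\<Sum>i=1..<n. min (l i) (2 * r0)) + 2 * r0) / (v1 + v2) * wV"
    if "feasibleP n rI r0 v1 v2 wI wV l D Y" for D Y
    using that assms(7) unfolding feasibleP_def by blast
  show ?thesis
    unfolding optimal_valueP_def using feas sumopt upper by blast
qed

end
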